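(* Let $q$ be a prime power, let $\mathcal{F}$ be a flag on $\mathbb{F}_{q^n}$ whose best friend is the subfield $\mathbb{F}_{q^m}$, and let $\beta\in\mathbb{F}_{q^n}^*$. Then $|\mathrm{Orb}_\beta(\mathcal{F})|=|\beta|$ if and only if $|\beta|$ and $q^m-1$ are coprime. In particular, this equality always holds if $q=2$ and $m=1$.
   Context: A flag on $\mathbb{F}_{q^n}$ is a sequence $(\mathcal{F}_1,\ldots,\mathcal{F}_r)$ of $\mathbb{F}_q$-subspaces with $\{0\}\subsetneq\mathcal{F}_1\subsetneq\cdots\subsetneq\mathcal{F}_r\subsetneq\mathbb{F}_{q^n}$. For $\beta\in\mathbb{F}_{q^n}^*$ of multiplicative order $|\beta|$, $\mathcal{F}\beta=(\mathcal{F}_1\beta,\ldots,\mathcal{F}_r\beta)$ with $\mathcal{U}\beta=\{u\beta:u\in\mathcal{U}\}$, and $\mathrm{Orb}_\beta(\mathcal{F})=\{\mathcal{F}\beta^j:0\le j\le|\beta|-1\}$. A subfield $\mathbb{F}_{q^m}$ is a friend of $\mathcal{F}$ if every $\mathcal{F}_i$ is an $\mathbb{F}_{q^m}$-vector space; the best friend is the largest friend. *)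

theory Defs
  imports "HOL-Computational_Algebra.Primes"
begin

text \<open>The ambient field F_{q^n} is modelled as a finite field type 'a; the base field
  F_q is a subfield Fq of it with card Fq = q.\<close>

definition is_subfield :: "'a::field set \<Rightarrow> bool" where
  "is_subfield S \<longleftrightarrow> 0 \<in> S \<and> 1 \<in> S \<and>
     (\<forall>x\<in>S. \<forall>y\<in>S. x + y \<in> S \<and> x * y \<in> S) \<and>
     (\<forall>x\<in>S. - x \<in> S) \<and> (\<forall>x\<in>S. inverse x \<in> S)"

definition is_subspace_over :: "'a::field set \<Rightarrow> 'a set \<Rightarrow> bool" where
  "is_subspace_over S U \<longleftrightarrow> 0 \<in> U \<and>
     (\<forall>x\<in>U. \<forall>y\<in>U. x + y \<in> U) \<and> (\<forall>s\<in>S. \<forall>u\<in>U. s * u \<in> U)"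

definition is_flag :: "'a::field set \<Rightarrow> 'a set list \<Rightarrow> bool" where
  "is_flag Fq F \<longleftrightarrow> F \<noteq> [] \<and> (\<forall>U\<in>set F. is_subspace_over Fq U) \<and>
     {0} \<subset> F ! 0 \<and> F ! (length F - 1) \<subset> UNIV \<and>
     (\<forall>i. Suc i < length F \<longrightarrow> F ! i \<subset> F ! Suc i)"

definition is_friend :: "'a::field set \<Rightarrow> 'a set list \<Rightarrow> 'a set \<Rightarrow> bool" where
  "is_friend Fq F E \<longleftrightarrow> is_subfield E \<and> Fq \<subseteq> E \<and> (\<forall>U\<in>set F. is_subspace_over E U)"

definition is_best_friend :: "'a::{field,finite} set \<Rightarrow> 'a set list \<Rightarrow> 'a set \<Rightarrow> bool" where
  "is_best_friend Fq F E \<longleftrightarrow> is_friend Fq F E \<and>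
     (\<forall>E'. is_friend Fq F E' \<longrightarrow> card E' \<le> card E)"

definition mult_order :: "'a::field \<Rightarrow> nat" where
  "mult_order b = (LEAST k. 0 < k \<and> b ^ k = 1)"

definition flag_mult :: "'a::field set list \<Rightarrow> 'a \<Rightarrow> 'a set list" where
  "flag_mult F b = map (\<lambda>U. (\<lambda>u. u * b) ` U) F"

definition orbit :: "'a::field \<Rightarrow> 'a set list \<Rightarrow> 'a set list set" where
  "orbit b F = {flag_mult F (b ^ j) | j. j < mult_order b}"

end

theory Submission
  imports Defs "HOL-Computational_Algebra.Polynomial"
begin

lemma roots_bound:
  fixes k :: nat assumes "k > 0"
  shows "card {x::'a::field. x^k = 1} \<le> k"
proof -
  let ?p = "monom (1::'a) k - 1"
  have "coeff ?p k = 1" using assms by (simp add: coeff_monom)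
  hence "?p \<noteq> 0" by (metis coeff_0 zero_neq_one)
  hence "card {x. poly ?p x = 0} \<le> degree ?p" by (rule card_poly_roots_bound)
  moreover have "degree ?p \<le> k" by (intro degree_diff_le degree_monom_le) auto
  moreover have "{x. poly ?p x = 0} = {x. x^k = 1}" by (auto simp: poly_monom)
  ultimately show ?thesis by simp
qed

lemma subfield_pow:
  assumes "is_subfield S" "x \<in> S" "x \<noteq> 0" and fin: "finite (S::'a::field set)"
  shows "x ^ (card S - 1) = 1"
proof -
  let ?S = "S - {0}"
  have cl: "x*y \<in> ?S" if "y \<in> ?S" for y using assms that unfolding is_subfield_def by auto
  have inj: "inj_on (\<lambda>y. x*y) ?S" using assms by (auto simp: inj_on_def)
  have img: "(\<lambda>y. x*y) ` ?S = ?S"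
  proof
    show "(\<lambda>y. x*y) ` ?S \<subseteq> ?S" using cl by auto
    show "?S \<subseteq> (\<lambda>y. x*y) ` ?S"
    proof
      fix z assume z: "z \<in> ?S"
      have "inverse x * z \<in> ?S" using assms z unfolding is_subfield_def by auto
      moreover have "z = x * (inverse x * z)" using assms by simp
      ultimately show "z \<in> (\<lambda>y. x*y) ` ?S" by blast
    qed
  qed
  have e1: "prod (\<lambda>y. x*y) ?S = prod id ?S"
    using prod.reindex[OF inj, of id] img by simp
  have e2: "prod (\<lambda>y. x*y) ?S = x^card ?S * prod id ?S" by (simp add: prod.distrib)
  have nz: "prod id ?S \<noteq> 0" using fin by simp
  have cS: "card ?S = card S - 1" using assms fin by (simp add: card_Diff_singleton is_subfield_def)
  have "x^(card S - 1) * prod id ?S = 1 * prod id ?S" using e1 e2 cS by simp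
  thus ?thesis using mult_right_cancel[OF nz] by blast
qed

lemma subfield_UNIV: "is_subfield (UNIV :: 'a::field set)"
  by (simp add: is_subfield_def)

lemma card_ge2: "2 \<le> card (UNIV :: 'a::{field,finite} set)"
proof -
  have "card {0::'a, 1} \<le> card (UNIV :: 'a set)" by (rule card_mono) auto
  thus ?thesis by simp
qed

lemma order_props:
  fixes \<beta> :: "'a::{field,finite}" assumes "\<beta> \<noteq> 0"
  shows "0 < mult_order \<beta>" "\<beta> ^ mult_order \<beta> = 1" "\<beta>^k = 1 \<longleftrightarrow> mult_order \<beta> dvd k"
proof -
  let ?c = "card (UNIV :: 'a set) - 1"
  have "\<beta> ^ ?c = 1" using subfield_pow[OF subfield_UNIV, of \<beta>] assms by simp
  moreover have "?c > 0" using card_ge2[where 'a='a] by linarith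
  ultimately have ex: "\<exists>k. 0 < k \<and> \<beta>^k = 1" by blast
  have N: "0 < mult_order \<beta> \<and> \<beta> ^ mult_order \<beta> = 1"
    unfolding mult_order_def by (rule LeastI_ex[OF ex])
  thus "0 < mult_order \<beta>" "\<beta> ^ mult_order \<beta> = 1" by auto
  show "\<beta>^k = 1 \<longleftrightarrow> mult_order \<beta> dvd k"
  proof
    assume k: "\<beta>^k = 1"
    let ?N = "mult_order \<beta>"
    have "\<beta>^k = \<beta>^(?N * (k div ?N) + k mod ?N)" by simp
    also have "\<dots> = (\<beta>^?N)^(k div ?N) * \<beta>^(k mod ?N)"
      by (simp only: power_add power_mult)
    finally have "\<beta>^k = (\<beta>^?N)^(k div ?N) * \<beta>^(k mod ?N)" .
    hence r: "\<beta>^(k mod ?N) = 1" using k N by simp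
    show "?N dvd k"
    proof (rule ccontr)
      assume "\<not> ?N dvd k"
      hence "0 < k mod ?N" by (simp add: mod_greater_zero_iff_not_dvd)
      hence "?N \<le> k mod ?N" using r unfolding mult_order_def by (simp add: Least_le)
      moreover have "k mod ?N < ?N" using N by simp
      ultimately show False by simp
    qed
  next
    assume "mult_order \<beta> dvd k"
    then obtain t where "k = mult_order \<beta> * t" by blast
    thus "\<beta>^k = 1" using N by (simp add: power_mult)
  qed
qed

lemma img_eq:
  fixes U :: "'a::{field,finite} set"
  assumes "\<gamma> \<noteq> 0" "(\<lambda>u. u*\<gamma>) ` U \<subseteq> U"
  shows "(\<lambda>u. u*\<gamma>) ` U = U"
proof -
  have "inj_on (\<lambda>u. u*\<gamma>) U" using assms by (auto simp: inj_on_def)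
  hence "card ((\<lambda>u. u*\<gamma>) ` U) = card U" by (rule card_image)
  thus ?thesis using assms by (intro card_subset_eq) auto
qed

lemma map_self_iff: "(map f xs = xs) = (\<forall>x\<in>set xs. f x = x)"
  by (induction xs) auto

lemma stab:
  fixes F :: "'a::{field,finite} set list"
  assumes bf: "is_best_friend Fq F E" and g: "\<gamma> \<noteq> 0"
  shows "flag_mult F \<gamma> = F \<longleftrightarrow> \<gamma> \<in> E"
proof -
  have fr: "is_friend Fq F E" using bf by (simp add: is_best_friend_def)
  have Esf: "is_subfield E" and FqE: "Fq \<subseteq> E" and hU: "\<And>U. U \<in> set F \<Longrightarrow> is_subspace_over E U"
    using fr by (auto simp: is_friend_def)
  define L where "L = {\<gamma>. \<forall>U\<in>set F. (\<lambda>u. u*\<gamma>)`U \<subseteq> U}"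
  have Lm: "u*x \<in> U" if "x \<in> L" "U \<in> set F" "u \<in> U" for x U u
    using that unfolding L_def by blast
  have EL: "E \<subseteq> L"
  proof
    fix e assume e: "e \<in> E"
    show "e \<in> L" unfolding L_def
    proof (intro CollectI ballI subsetI)
      fix U z assume U: "U \<in> set F" and "z \<in> (\<lambda>u. u*e)`U"
      then obtain u where u: "u \<in> U" "z = u*e" by auto
      hence "e*u \<in> U" using hU[OF U] e unfolding is_subspace_over_def by blast
      thus "z \<in> U" using u by (simp add: mult.commute)
    qed
  qed
  have m1: "-1 \<in> E" using Esf unfolding is_subfield_def by auto
  have "is_subfield L"
    unfolding is_subfield_def
  proof (intro conjI ballI)
    show "0 \<in> L" using hU unfolding L_def is_subspace_over_def by auto
    show "1 \<in> L" unfolding L_def by auto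
  next
    fix x y assume x: "x \<in> L" and y: "y \<in> L"
    show "x + y \<in> L" unfolding L_def
    proof (intro CollectI ballI subsetI)
      fix U z assume U: "U \<in> set F" and "z \<in> (\<lambda>u. u*(x+y)) ` U"
      then obtain u where u: "u \<in> U" "z = u*(x+y)" by auto
      have "u*x \<in> U" "u*y \<in> U" using Lm x y U u by auto
      thus "z \<in> U" using hU[OF U] u unfolding is_subspace_over_def by (simp add: distrib_left)
    qed
    show "x * y \<in> L" unfolding L_def
    proof (intro CollectI ballI subsetI)
      fix U z assume U: "U \<in> set F" and "z \<in> (\<lambda>u. u*(x*y)) ` U"
      then obtain u where u: "u \<in> U" "z = u*(x*y)" by auto
      have "u*x \<in> U" using Lm x U u by auto
      hence "(u*x)*y \<in> U" using Lm y U by auto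
      thus "z \<in> U" using u by (simp add: mult.assoc)
    qed
  next
    fix x assume x: "x \<in> L"
    show "- x \<in> L" unfolding L_def
    proof (intro CollectI ballI subsetI)
      fix U z assume U: "U \<in> set F" and "z \<in> (\<lambda>u. u*(-x)) ` U"
      then obtain u where u: "u \<in> U" "z = u*(-x)" by auto
      have "u*x \<in> U" using Lm x U u by auto
      hence "(-1)*(u*x) \<in> U" using hU[OF U] m1 unfolding is_subspace_over_def by blast
      thus "z \<in> U" using u by simp
    qed
    show "inverse x \<in> L"
    proof (cases "x = 0")
      case True thus ?thesis using x by simp
    next
      case False
      show ?thesis unfolding L_def
      proof (intro CollectI ballI subsetI)
        fix U z assume U: "U \<in> set F" and "z \<in> (\<lambda>u. u*(inverse x)) ` U"
        then obtain u where u: "u \<in> U" "z = u*inverse x" by auto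
        have "(\<lambda>u. u*x) ` U \<subseteq> U" using Lm[OF x U] by blast
        hence "(\<lambda>u. u*x) ` U = U" by (rule img_eq[OF False])
        then obtain v where v: "v \<in> U" "u = v*x" using u by (metis imageE)
        have "z = v * (x * inverse x)" using u v by (simp add: mult.assoc)
        thus "z \<in> U" using v False by simp
      qed
    qed
  qed
  moreover have "Fq \<subseteq> L" using FqE EL by auto
  moreover have "\<forall>U\<in>set F. is_subspace_over L U"
  proof
    fix U assume U: "U \<in> set F"
    have "s * u \<in> U" if s: "s \<in> L" and u: "u \<in> U" for s u
    proof -
      have "u * s \<in> U" using Lm s u U by auto
      thus ?thesis by (simp add: mult.commute)
    qed
    thus "is_subspace_over L U" using hU[OF U] unfolding is_subspace_over_def by blast
  qed
  ultimately have "is_friend Fq F L" by (simp add: is_friend_def)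
  hence "card L \<le> card E" using bf by (simp add: is_best_friend_def)
  hence LE: "E = L" using EL by (intro card_seteq) auto
  have "flag_mult F \<gamma> = F \<longleftrightarrow> (\<forall>U\<in>set F. (\<lambda>u. u*\<gamma>)`U = U)"
    unfolding flag_mult_def by (rule map_self_iff)
  also have "\<dots> \<longleftrightarrow> (\<forall>U\<in>set F. (\<lambda>u. u*\<gamma>)`U \<subseteq> U)"
  proof -
    have "((\<lambda>u. u*\<gamma>)`U = U) = ((\<lambda>u. u*\<gamma>)`U \<subseteq> U)" for U
      by (metis img_eq[OF g] subset_refl)
    thus ?thesis by simp
  qed
  also have "\<dots> \<longleftrightarrow> \<gamma> \<in> L" by (simp add: L_def)
  also have "\<dots> \<longleftrightarrow> \<gamma> \<in> E" using LE by simp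
  finally show ?thesis .
qed

lemma flag_mult_mult: "flag_mult (flag_mult F a) b = flag_mult F (a*b)"
  by (simp add: flag_mult_def image_image mult.assoc comp_def)

lemma flag_mult_1: "flag_mult F 1 = F"
  by (simp add: flag_mult_def)

lemma E_char:
  fixes E :: "'a::{field,finite} set"
  assumes "is_subfield E" "x \<noteq> 0"
  shows "x \<in> E \<longleftrightarrow> x ^ (card E - 1) = 1"
proof
  assume "x \<in> E" thus "x ^ (card E - 1) = 1" using subfield_pow[OF assms(1) _ assms(2)] by simp
next
  assume xc: "x ^ (card E - 1) = 1"
  have "card {0::'a,1} \<le> card E" using assms by (intro card_mono) (auto simp: is_subfield_def)
  hence c: "card E - 1 > 0" by simp
  have cE: "card (E - {0}) = card E - 1" using assms by (simp add: card_Diff_singleton is_subfield_def)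
  have sub: "E - {0} \<subseteq> {x. x ^ (card E - 1) = 1}" using subfield_pow[OF assms(1)] by auto
  have "E - {0} = {x. x ^ (card E - 1) = 1}"
    using roots_bound[OF c, where 'a='a] cE sub by (intro card_seteq) auto
  thus "x \<in> E" using xc by auto
qed

lemma nt:
  fixes N c :: nat assumes "0 < N"
  shows "(\<exists>d. 0 < d \<and> d < N \<and> N dvd d*c) \<longleftrightarrow> \<not> coprime N c"
proof
  assume "\<exists>d. 0 < d \<and> d < N \<and> N dvd d*c"
  then obtain d where d: "0 < d" "d < N" "N dvd d*c" by blast
  show "\<not> coprime N c"
  proof
    assume "coprime N c"
    hence "N dvd d" using d(3) by (simp add: coprime_dvd_mult_left_iff)
    thus False using d by (simp add: nat_dvd_not_less)
  qed
next
  assume nc: "\<not> coprime N c"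
  define g where "g = gcd N c"
  have g0: "g > 0" using assms by (simp add: g_def)
  have g1: "g \<noteq> 1" using nc by (simp add: g_def coprime_iff_gcd_eq_1)
  obtain a where a: "N = g*a" unfolding g_def by (metis gcd_dvd1 dvdE)
  obtain b where b: "c = g*b" unfolding g_def by (metis gcd_dvd2 dvdE)
  have "0 < a" using a assms by auto
  moreover have "a < N" using a g0 g1 \<open>0 < a\<close> by auto
  moreover have "N dvd a*c" using a b by (simp add: mult.left_commute)
  ultimately show "\<exists>d. 0 < d \<and> d < N \<and> N dvd d*c" by blast
qed

theorem corollary4p3:
  fixes Fq :: "'a::{field,finite} set" and F :: "'a set list" and E :: "'a set"
    and q n m :: nat and \<beta> :: 'a
  assumes "\<exists>p k. prime p \<and> 0 < k \<and> q = p ^ k"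
    and "is_subfield Fq" and "card Fq = q" and "card (UNIV :: 'a set) = q ^ n"
    and "is_flag Fq F"
    and "is_best_friend Fq F E" and "card E = q ^ m"
    and "\<beta> \<noteq> 0"
  shows "(card (orbit \<beta> F) = mult_order \<beta> \<longleftrightarrow> coprime (mult_order \<beta>) (q ^ m - 1))
     \<and> (q = 2 \<and> m = 1 \<longrightarrow> card (orbit \<beta> F) = mult_order \<beta>)"
proof -
  note bf = assms(6) and b0 = assms(8)
  have Esf: "is_subfield E" using bf by (simp add: is_best_friend_def is_friend_def)
  define N where "N = mult_order \<beta>"
  define c where "c = card E - 1"
  have N0: "0 < N" and NB: "\<beta>^N = 1" and Ndvd: "\<And>k. \<beta>^k = 1 \<longleftrightarrow> N dvd k"
    using order_props[OF b0] unfolding N_def by auto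
  define h where "h j = flag_mult F (\<beta>^j)" for j
  have orb: "orbit \<beta> F = h ` {..<N}" by (auto simp: orbit_def h_def N_def)
  have key: "flag_mult F (\<beta>^d) = F \<longleftrightarrow> N dvd d*c" for d
  proof -
    have "flag_mult F (\<beta>^d) = F \<longleftrightarrow> \<beta>^d \<in> E" using stab[OF bf] b0 by simp
    also have "\<dots> \<longleftrightarrow> (\<beta>^d)^c = 1" unfolding c_def using E_char[OF Esf] b0 by simp
    also have "\<dots> \<longleftrightarrow> N dvd d*c" by (simp add: Ndvd flip: power_mult)
    finally show ?thesis .
  qed
  have noinj: False if "i < j" "j < N" "h i = h j" "\<not> (\<exists>d. 0 < d \<and> d < N \<and> flag_mult F (\<beta>^d) = F)" for i j
  proof -
    have hi: "flag_mult (h i) (inverse (\<beta>^i)) = F"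
      using b0 by (simp add: h_def flag_mult_mult flag_mult_1)
    have e1: "\<beta>^j = \<beta>^i * \<beta>^(j-i)" using that(1) by (simp flip: power_add)
    have e2: "\<beta>^j * inverse (\<beta>^i) = \<beta>^(j-i)" unfolding e1 using b0 by (simp add: field_simps)
    have hj: "flag_mult (h j) (inverse (\<beta>^i)) = flag_mult F (\<beta>^(j-i))"
      unfolding h_def flag_mult_mult e2 by (rule refl)
    have "flag_mult F (\<beta>^(j-i)) = F" using that(3) hi hj by simp
    moreover have "0 < j - i" "j - i < N" using that(1,2) by auto
    ultimately show False using that(4) by blast
  qed
  have inj_iff: "inj_on h {..<N} \<longleftrightarrow> \<not> (\<exists>d. 0 < d \<and> d < N \<and> flag_mult F (\<beta>^d) = F)"
  proof
    assume i: "inj_on h {..<N}"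
    show "\<not> (\<exists>d. 0 < d \<and> d < N \<and> flag_mult F (\<beta>^d) = F)"
    proof
      assume "\<exists>d. 0 < d \<and> d < N \<and> flag_mult F (\<beta>^d) = F"
      then obtain d where d: "0 < d" "d < N" "flag_mult F (\<beta>^d) = F" by blast
      have "h 0 = h d" using d by (simp add: h_def flag_mult_1)
      hence "0 = d" using i d N0 unfolding inj_on_def by blast
      thus False using d by simp
    qed
  next
    assume n: "\<not> (\<exists>d. 0 < d \<and> d < N \<and> flag_mult F (\<beta>^d) = F)"
    show "inj_on h {..<N}"
      unfolding inj_on_def
    proof (intro ballI impI)
      fix i j assume "i \<in> {..<N}" "j \<in> {..<N}" "h i = h j"
      thus "i = j" using noinj[of i j] noinj[of j i] n
        by (metis lessThan_iff linorder_neqE_nat)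
    qed
  qed
  have "card (orbit \<beta> F) = N \<longleftrightarrow> inj_on h {..<N}"
    using inj_on_iff_eq_card[of "{..<N}" h] orb by simp
  also have "\<dots> \<longleftrightarrow> \<not> coprime N c \<longrightarrow> False"
    using inj_iff key nt[OF N0, of c] by simp
  finally have main: "card (orbit \<beta> F) = N \<longleftrightarrow> coprime N c" by simp
  have cq: "c = q^m - 1" using assms(7) c_def by simp
  show ?thesis using main cq N_def by auto
qed

end
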